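(* Let $\Gamma$ be a Fuchsian group and let $z_0\in\mathbb{H}^2$ be a point not fixed by any non-identity element of $\Gamma$. Define $B_\Gamma(z_0)=\bigcup_{z\in D_\Gamma(z_0)}D_\Gamma(z)$ and $U_\Gamma(z_0)=\{\gamma\in\Gamma:\ \gamma\cdot D_\Gamma(z_0)\cap B_\Gamma(z_0)\neq\emptyset\}$. Then $U_\Gamma(z_0)$ is a geodesic cover of $\Gamma$ corresponding to the fundamental domain $D_\Gamma(z_0)$.
   Context: $\Gamma$ acts on the upper half plane $\mathbb{H}^2$ by Möbius transformations; $d_{\mathbb{H}^2}$ is the hyperbolic metric. For $w\in\mathbb{H}^2$, the Dirichlet domain is $D_\Gamma(w)=\{z\in\mathbb{H}^2: d_{\mathbb{H}^2}(z,w)\leq d_{\mathbb{H}^2}(z,\gamma\cdot w)\ \forall\gamma\in\Gamma\}$; when $w$ is not fixed by a non-identity element it is a fundamental domain. A subset $\Gamma_0\subset\Gamma$ containing the identity is a geodesic cover of $\Gamma$ corresponding to a fundamental domain $F$ if for all $p,q\in F$, $\min_{\gamma\in\Gamma}d_{\mathbb{H}^2}(p,\gamma\cdot q)=\min_{\gamma\in\Gamma_0}d_{\mathbb{H}^2}(p,\gamma\cdot q)$. *)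

theory Defs
  imports "HOL-Analysis.Analysis"
begin

text \<open>A Fuchsian group is a discrete subgroup of PSL(2,R); we represent it by its preimage,
  a discrete subgroup of SL(2,R) (the action on the upper half plane is the same).\<close>

type_synonym mat2 = "real \<times> real \<times> real \<times> real"

definition upper_half_plane :: "complex set" where
  "upper_half_plane = {z. Im z > 0}"

definition mat_mult :: "mat2 \<Rightarrow> mat2 \<Rightarrow> mat2" where
  "mat_mult A B = (case A of (a,b,c,d) \<Rightarrow> case B of (e,f,g,h) \<Rightarrow>
      (a*e + b*g, a*f + b*h, c*e + d*g, c*f + d*h))"

definition mat_det :: "mat2 \<Rightarrow> real" where
  "mat_det A = (case A of (a,b,c,d) \<Rightarrow> a*d - b*c)"

definition mat_inv :: "mat2 \<Rightarrow> mat2" where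
  "mat_inv A = (case A of (a,b,c,d) \<Rightarrow> (d, -b, -c, a))"

definition mat_id :: mat2 where
  "mat_id = (1, 0, 0, 1)"

definition moeb :: "mat2 \<Rightarrow> complex \<Rightarrow> complex" where
  "moeb A z = (case A of (a,b,c,d) \<Rightarrow>
      (of_real a * z + of_real b) / (of_real c * z + of_real d))"

definition fuchsian_group :: "mat2 set \<Rightarrow> bool" where
  "fuchsian_group \<Gamma> \<longleftrightarrow>
     (\<forall>g\<in>\<Gamma>. mat_det g = 1) \<and> mat_id \<in> \<Gamma> \<and>
     (\<forall>g\<in>\<Gamma>. \<forall>h\<in>\<Gamma>. mat_mult g h \<in> \<Gamma>) \<and> (\<forall>g\<in>\<Gamma>. mat_inv g \<in> \<Gamma>) \<and>
     (\<forall>g\<in>\<Gamma>. \<exists>e>0. \<forall>h\<in>\<Gamma>. dist h g < e \<longrightarrow> h = g)"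

definition hdist :: "complex \<Rightarrow> complex \<Rightarrow> real" where
  "hdist z w = arcosh (1 + (cmod (z - w))\<^sup>2 / (2 * Im z * Im w))"

definition acts_trivially :: "mat2 \<Rightarrow> bool" where
  "acts_trivially g \<longleftrightarrow> (\<forall>z\<in>upper_half_plane. moeb g z = z)"

definition dirichlet_domain :: "mat2 set \<Rightarrow> complex \<Rightarrow> complex set" where
  "dirichlet_domain \<Gamma> w = {z \<in> upper_half_plane. \<forall>\<gamma>\<in>\<Gamma>. hdist z w \<le> hdist z (moeb \<gamma> w)}"

definition B_set :: "mat2 set \<Rightarrow> complex \<Rightarrow> complex set" where
  "B_set \<Gamma> z0 = (\<Union>z\<in>dirichlet_domain \<Gamma> z0. dirichlet_domain \<Gamma> z)"

definition U_set :: "mat2 set \<Rightarrow> complex \<Rightarrow> mat2 set" where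
  "U_set \<Gamma> z0 = {\<gamma>\<in>\<Gamma>. moeb \<gamma> ` dirichlet_domain \<Gamma> z0 \<inter> B_set \<Gamma> z0 \<noteq> {}}"

definition geodesic_cover :: "mat2 set \<Rightarrow> mat2 set \<Rightarrow> complex set \<Rightarrow> bool" where
  "geodesic_cover \<Gamma> \<Gamma>0 F \<longleftrightarrow> \<Gamma>0 \<subseteq> \<Gamma> \<and> mat_id \<in> \<Gamma>0 \<and>
     (\<forall>p\<in>F. \<forall>q\<in>F.
        (\<exists>\<gamma>\<in>\<Gamma>. hdist p (moeb \<gamma> q) = (INF g\<in>\<Gamma>. hdist p (moeb g q))) \<and>
        (\<exists>\<gamma>\<in>\<Gamma>0. hdist p (moeb \<gamma> q) = (INF g\<in>\<Gamma>0. hdist p (moeb g q))) \<and>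
        (INF g\<in>\<Gamma>. hdist p (moeb g q)) = (INF g\<in>\<Gamma>0. hdist p (moeb g q)))"

end

theory Submission
  imports Defs "HOL-Analysis.Analysis"
begin


lemma denom_nz:
  assumes "Im z > 0" "a*d - b*c = (1::real)"
  shows "of_real c * z + of_real d \<noteq> 0"
proof
  assume h: "of_real c * z + of_real d = 0"
  then have "Im (of_real c * z + of_real d) = 0" by simp
  then have "c = 0" using assms(1) by simp
  with h have "d = 0" by simp
  with \<open>c = 0\<close> assms(2) show False by simp
qed

lemma Im_moeb:
  assumes "Im z > 0" "a*d - b*c = (1::real)"
  shows "Im (moeb (a,b,c,d) z) = Im z / (cmod (of_real c * z + of_real d))\<^sup>2"
proof -
  have "Im (moeb (a,b,c,d) z) = (Im (of_real a * z + of_real b) * Re (of_real c * z + of_real d) -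
        Re (of_real a * z + of_real b) * Im (of_real c * z + of_real d)) / (cmod (of_real c * z + of_real d))\<^sup>2"
    unfolding moeb_def by (simp add: Im_divide cmod_power2)
  also have "\<dots> = (a*d - b*c) * Im z / (cmod (of_real c * z + of_real d))\<^sup>2"
    by (simp add: algebra_simps)
  finally show ?thesis using assms by simp
qed

lemma moeb_in_H:
  assumes "Im z > 0" "a*d - b*c = (1::real)"
  shows "Im (moeb (a,b,c,d) z) > 0"
  using Im_moeb[OF assms] denom_nz[OF assms] assms by simp

lemma moeb_diff:
  assumes "Im z > 0" "Im w > 0" "a*d - b*c = (1::real)"
  shows "moeb (a,b,c,d) z - moeb (a,b,c,d) w = (z - w) / ((of_real c * z + of_real d) * (of_real c * w + of_real d))"
proof -
  have n1: "of_real c * z + of_real d \<noteq> 0" using denom_nz assms by blast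
  have n2: "of_real c * w + of_real d \<noteq> 0" using denom_nz assms by blast
  have "complex_of_real a * complex_of_real d - complex_of_real b * complex_of_real c = 1"
    by (metis assms(3) of_real_1 of_real_diff of_real_mult)
  then show ?thesis unfolding moeb_def using n1 n2
    by (simp add: field_simps)
qed


lemma hdist_inv:
  assumes "Im z > 0" "Im w > 0" "a*d - b*c = (1::real)"
  shows "hdist (moeb (a,b,c,d) z) (moeb (a,b,c,d) w) = hdist z w"
proof -
  define N1 where "N1 = cmod (of_real c * z + of_real d)"
  define N2 where "N2 = cmod (of_real c * w + of_real d)"
  have p1: "N1 > 0" unfolding N1_def using denom_nz[OF assms(1,3)] by simp
  have p2: "N2 > 0" unfolding N2_def using denom_nz[OF assms(2,3)] by simp
  have d: "cmod (moeb (a,b,c,d) z - moeb (a,b,c,d) w) = cmod (z - w) / (N1 * N2)"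
    unfolding moeb_diff[OF assms] N1_def N2_def by (simp add: norm_divide norm_mult)
  have i1: "Im (moeb (a,b,c,d) z) = Im z / N1\<^sup>2" unfolding N1_def using Im_moeb assms by blast
  have i2: "Im (moeb (a,b,c,d) w) = Im w / N2\<^sup>2" unfolding N2_def using Im_moeb assms by blast
  have "(cmod (moeb (a,b,c,d) z - moeb (a,b,c,d) w))\<^sup>2 / (2 * Im (moeb (a,b,c,d) z) * Im (moeb (a,b,c,d) w))
      = (cmod (z - w))\<^sup>2 / (2 * Im z * Im w)"
    unfolding d i1 i2 using p1 p2 assms by (simp add: field_simps power2_eq_square)
  then show ?thesis unfolding hdist_def by simp
qed

lemma moeb_comp:
  assumes "Im z > 0" "a*d - b*c = (1::real)" "e*h - f*g = (1::real)"
  shows "moeb (mat_mult (a,b,c,d) (e,f,g,h)) z = moeb (a,b,c,d) (moeb (e,f,g,h) z)"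
proof -
  have n1: "of_real g * z + of_real h \<noteq> 0" using denom_nz[OF assms(1,3)] .
  have n2: "of_real c * moeb (e,f,g,h) z + of_real d \<noteq> 0"
    using denom_nz[OF moeb_in_H[OF assms(1,3)] assms(2)] .
  then have n3: "of_real c * (of_real e * z + of_real f) + of_real d * (of_real g * z + of_real h) \<noteq> 0"
  proof -
    have "of_real c * (of_real e * z + of_real f) + of_real d * (of_real g * z + of_real h)
       = (of_real c * moeb (e,f,g,h) z + of_real d) * (of_real g * z + of_real h)"
      using n1 unfolding moeb_def by (simp add: field_simps)
    then show ?thesis using n1 n2 by simp
  qed
  define N where "N = of_real g * z + of_real h"
  define W where "W = moeb (e,f,g,h) z"
  have NW: "W * N = of_real e * z + of_real f" unfolding W_def N_def moeb_def using n1 by simp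
  have n2': "of_real c * W + of_real d \<noteq> 0" using n2 W_def by simp
  have "moeb (a,b,c,d) W = (of_real a * W + of_real b) / (of_real c * W + of_real d)"
    unfolding moeb_def by simp
  also have "\<dots> = ((of_real a * W + of_real b) * N) / ((of_real c * W + of_real d) * N)"
    using n1 N_def by simp
  also have "\<dots> = (of_real a * (W * N) + of_real b * N) / (of_real c * (W * N) + of_real d * N)"
    by (simp add: algebra_simps)
  also have "\<dots> = moeb (mat_mult (a,b,c,d) (e,f,g,h)) z"
    unfolding NW by (simp add: N_def moeb_def mat_mult_def algebra_simps)
  finally show ?thesis unfolding W_def by simp
qed

lemma hdist_nonneg: "Im z > 0 \<Longrightarrow> Im w > 0 \<Longrightarrow> hdist z w \<ge> 0"
  unfolding hdist_def by (intro arcosh_nonneg_real) simp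

lemma hdist_self: "hdist z z = 0"
  unfolding hdist_def by simp

lemma hdist_sym: "hdist z w = hdist w z"
  unfolding hdist_def by (simp add: norm_minus_commute mult.commute mult.left_commute)

lemma hdist_le_iff:
  assumes "Im p > 0" "Im w > 0" "Im q > 0"
  shows "hdist p w \<le> hdist p q \<longleftrightarrow>
     (cmod (p - w))\<^sup>2 / (2 * Im p * Im w) \<le> (cmod (p - q))\<^sup>2 / (2 * Im p * Im q)"
proof -
  have a: "1 \<le> 1 + (cmod (p - w))\<^sup>2 / (2 * Im p * Im w)" using assms by simp
  have b: "1 \<le> 1 + (cmod (p - q))\<^sup>2 / (2 * Im p * Im q)" using assms by simp
  show ?thesis unfolding hdist_def using arcosh_less_iff_real[OF b a] by (simp add: not_less[symmetric])
qed


lemma norm4_le: "norm ((x1,x2,x3,x4)::mat2) \<le> \<bar>x1\<bar> + \<bar>x2\<bar> + \<bar>x3\<bar> + \<bar>x4\<bar>"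
proof -
  have "norm ((x1,x2,x3,x4)::mat2) \<le> norm x1 + norm (x2,x3,x4)" by (rule norm_Pair_le)
  also have "norm (x2,x3,x4) \<le> norm x2 + norm (x3,x4)" by (rule norm_Pair_le)
  also have "norm (x3,x4) \<le> norm x3 + norm x4" by (rule norm_Pair_le)
  finally show ?thesis by simp
qed

lemma norm4_ge:
  shows "\<bar>x1\<bar> \<le> norm ((x1,x2,x3,x4)::mat2)" "\<bar>x2\<bar> \<le> norm ((x1,x2,x3,x4)::mat2)"
    "\<bar>x3\<bar> \<le> norm ((x1,x2,x3,x4)::mat2)" "\<bar>x4\<bar> \<le> norm ((x1,x2,x3,x4)::mat2)"
proof -
  have a: "norm x1 \<le> norm ((x1,x2,x3,x4)::mat2)" by (rule norm_fst_le)
  have b: "norm (x2,x3,x4) \<le> norm ((x1,x2,x3,x4)::mat2)" by (rule norm_snd_le)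
  have c: "norm x2 \<le> norm (x2,x3,x4)" by (rule norm_fst_le)
  have d: "norm (x3,x4) \<le> norm (x2,x3,x4)" by (rule norm_snd_le)
  have e: "norm x3 \<le> norm (x3,x4)" "norm x4 \<le> norm (x3,x4)" by (rule norm_fst_le, rule norm_snd_le)
  show "\<bar>x1\<bar> \<le> norm ((x1,x2,x3,x4)::mat2)" "\<bar>x2\<bar> \<le> norm ((x1,x2,x3,x4)::mat2)"
    "\<bar>x3\<bar> \<le> norm ((x1,x2,x3,x4)::mat2)" "\<bar>x4\<bar> \<le> norm ((x1,x2,x3,x4)::mat2)"
    using a b c d e by auto
qed

lemma Im_bounds:
  fixes p w :: complex and K :: real
  assumes "Im p > 0" "Im w > 0" "K \<ge> 0" "(cmod (p - w))\<^sup>2 \<le> 2 * K * Im p * Im w"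
  shows "Im w \<ge> Im p / (8*K+2)" "Im w \<le> (2 + 8*K) * Im p"
proof -
  have sq: "(Im p - Im w)\<^sup>2 \<le> 2 * K * Im p * Im w"
  proof -
    have "\<bar>Im (p - w)\<bar> \<le> cmod (p - w)" by (rule abs_Im_le_cmod)
    then have "(Im (p - w))\<^sup>2 \<le> (cmod (p - w))\<^sup>2"
      by (metis abs_ge_zero power2_abs power_mono)
    then show ?thesis using assms(4) by simp
  qed
  show "Im w \<ge> Im p / (8*K+2)"
  proof (cases "Im w \<ge> Im p / 2")
    case True
    have "Im p / (8*K+2) \<le> Im p / 2" using assms by (intro divide_left_mono) auto
    then show ?thesis using True by linarith
  next
    case False
    then have "Im p - Im w \<ge> Im p / 2" by simp
    then have "(Im p / 2)\<^sup>2 \<le> (Im p - Im w)\<^sup>2" using assms(1)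
      by (intro power_mono) auto
    with sq have "(Im p)\<^sup>2 \<le> 8 * K * Im p * Im w" by (simp add: power_divide)
    then have "Im p \<le> 8 * K * Im w" using assms(1) by (simp add: power2_eq_square)
    then have "Im p \<le> (8*K+2) * Im w" using assms(2) by (simp add: algebra_simps)
    then show ?thesis using assms by (simp add: divide_le_eq mult.commute)
  qed
  show "Im w \<le> (2 + 8*K) * Im p"
  proof (cases "Im w \<le> 2 * Im p")
    case True
    have "0 \<le> K * Im p" using assms by simp
    then show ?thesis using True by (simp add: algebra_simps)
  next
    case False
    then have "Im w - Im p \<ge> Im w / 2" by simp
    then have "(Im w / 2)\<^sup>2 \<le> (Im w - Im p)\<^sup>2" using assms(2)
      by (intro power_mono) auto
    also have "\<dots> = (Im p - Im w)\<^sup>2" by (rule power2_commute)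
    finally have "(Im w)\<^sup>2 \<le> 8 * K * Im p * Im w" using sq by (simp add: power_divide)
    then have "Im w \<le> 8 * K * Im p" using assms(2) by (simp add: power2_eq_square)
    then show ?thesis using assms by (simp add: algebra_simps)
  qed
qed


lemma coord_bound:
  assumes "Im q > 0" "cmod (of_real c * q + of_real d) \<le> R"
  shows "\<bar>c\<bar> \<le> R / Im q" "\<bar>d\<bar> \<le> R / Im q * \<bar>Re q\<bar> + R"
proof -
  have i: "\<bar>c * Im q\<bar> \<le> R" using abs_Im_le_cmod[of "of_real c * q + of_real d"] assms(2) by simp
  then show c: "\<bar>c\<bar> \<le> R / Im q" using assms(1) by (simp add: le_divide_eq abs_mult)
  have r: "\<bar>c * Re q + d\<bar> \<le> R" using abs_Re_le_cmod[of "of_real c * q + of_real d"] assms(2) by simp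
  have "\<bar>d\<bar> \<le> \<bar>c * Re q + d\<bar> + \<bar>c\<bar> * \<bar>Re q\<bar>" by (simp add: abs_mult[symmetric] abs_triangle_ineq4[of "c*Re q + d" "c * Re q", simplified])
  also have "\<dots> \<le> R + R / Im q * \<bar>Re q\<bar>" using r c by (intro add_mono mult_right_mono) auto
  finally show "\<bar>d\<bar> \<le> R / Im q * \<bar>Re q\<bar> + R" by simp
qed

lemma entries_bounded:
  fixes p q :: complex and K :: real
  assumes p: "Im p > 0" and q: "Im q > 0" and K: "K \<ge> 0"
  shows "\<exists>M. \<forall>a b c d. a*d - b*c = 1 \<longrightarrow>
     (cmod (p - moeb (a,b,c,d) q))\<^sup>2 \<le> 2 * K * Im p * Im (moeb (a,b,c,d) q) \<longrightarrow>
     \<bar>a\<bar> \<le> M \<and> \<bar>b\<bar> \<le> M \<and> \<bar>c\<bar> \<le> M \<and> \<bar>d\<bar> \<le> M"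
proof -
  define m where "m = Im p / (8*K+2)"
  define Mi where "Mi = (2 + 8*K) * Im p"
  define Mw where "Mw = cmod p + sqrt (2 * K * Im p * Mi)"
  define R1 where "R1 = sqrt (Im q / m)"
  define R2 where "R2 = Mw * R1"
  have m_pos: "m > 0" unfolding m_def using p K by simp
  have R1_nn: "R1 \<ge> 0" unfolding R1_def using m_pos q by simp
  have Mi_nn: "Mi \<ge> 0" unfolding Mi_def using p K by simp
  have Mw_nn: "Mw \<ge> 0" unfolding Mw_def using Mi_nn p K by simp
  have R2_nn: "R2 \<ge> 0" unfolding R2_def using R1_nn Mw_nn by simp
  define M where "M = (R1 / Im q + (R1 / Im q * \<bar>Re q\<bar> + R1)) + (R2 / Im q + (R2 / Im q * \<bar>Re q\<bar> + R2))"
  have nn: "R1 / Im q \<ge> 0" "R1 / Im q * \<bar>Re q\<bar> + R1 \<ge> 0" "R2 / Im q \<ge> 0" "R2 / Im q * \<bar>Re q\<bar> + R2 \<ge> 0"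
    using R1_nn R2_nn q by auto
  show ?thesis
  proof (intro exI allI impI)
    fix a b c d :: real
    assume det: "a*d - b*c = 1"
    define w where "w = moeb (a,b,c,d) q"
    assume h: "(cmod (p - moeb (a,b,c,d) q))\<^sup>2 \<le> 2 * K * Im p * Im (moeb (a,b,c,d) q)"
    then have h': "(cmod (p - w))\<^sup>2 \<le> 2 * K * Im p * Im w" unfolding w_def .
    have wH: "Im w > 0" unfolding w_def using moeb_in_H[OF q det] .
    have lo: "Im w \<ge> m" and hi: "Im w \<le> Mi" unfolding m_def Mi_def using Im_bounds[OF p wH K h'] by auto
    define N where "N = of_real c * q + of_real d"
    have Nnz: "N \<noteq> 0" unfolding N_def using denom_nz[OF q det] .
    have "Im w = Im q / (cmod N)\<^sup>2" unfolding w_def N_def using Im_moeb[OF q det] .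
    then have "(cmod N)\<^sup>2 = Im q / Im w" using Nnz wH by (simp add: field_simps)
    also have "\<dots> \<le> Im q / m" using lo m_pos q by (intro divide_left_mono) auto
    finally have N1: "cmod N \<le> R1" unfolding R1_def by (simp add: real_le_rsqrt)
    have "(cmod (p - w))\<^sup>2 \<le> 2 * K * Im p * Mi"
      using h' hi K p by (smt (verit) mult_left_mono mult_nonneg_nonneg)
    then have "cmod (p - w) \<le> sqrt (2 * K * Im p * Mi)" by (simp add: real_le_rsqrt)
    moreover have "cmod w \<le> cmod p + cmod (p - w)" by (metis norm_triangle_sub norm_minus_commute)
    ultimately have wb: "cmod w \<le> Mw" unfolding Mw_def by simp
    have "of_real a * q + of_real b = w * N" unfolding w_def N_def moeb_def using Nnz[unfolded N_def] by simp
    then have "cmod (of_real a * q + of_real b) = cmod w * cmod N" by (simp add: norm_mult)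
    also have "\<dots> \<le> R2" unfolding R2_def using wb N1 Mw_nn by (intro mult_mono) auto
    finally have N2: "cmod (of_real a * q + of_real b) \<le> R2" .
    note cb = coord_bound[OF q N1[unfolded N_def]] coord_bound[OF q N2]
    show "\<bar>a\<bar> \<le> M \<and> \<bar>b\<bar> \<le> M \<and> \<bar>c\<bar> \<le> M \<and> \<bar>d\<bar> \<le> M"
      using cb nn unfolding M_def by linarith
  qed
qed


lemma mat_cancel: "mat_det g = 1 \<Longrightarrow> mat_mult g (mat_mult (mat_inv g) h) = h"
  by (cases g; cases h) (simp add: mat_mult_def mat_inv_def mat_det_def algebra_simps,
      metis mult.commute ring_class.ring_distribs(1) ring_class.ring_distribs(2) mult_1 mult.assoc right_diff_distrib left_diff_distrib)

lemma mat_mult_id: "mat_mult g mat_id = g"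
  by (cases g) (simp add: mat_mult_def mat_id_def)

lemma moeb_id: "moeb mat_id z = z"
  by (simp add: moeb_def mat_id_def)

lemma aux_bound:
  fixes x y u v M D :: real
  assumes "\<bar>x\<bar> \<le> M" "\<bar>y\<bar> \<le> M" "\<bar>u\<bar> \<le> D" "\<bar>v\<bar> \<le> D"
  shows "\<bar>x * u - y * v\<bar> \<le> 2 * M * D"
proof -
  have "\<bar>x * u - y * v\<bar> \<le> \<bar>x\<bar>*\<bar>u\<bar> + \<bar>y\<bar>*\<bar>v\<bar>" by (simp add: abs_mult[symmetric] abs_triangle_ineq4)
  also have "\<dots> \<le> M * D + M * D" using assms by (intro add_mono mult_mono) auto
  finally show ?thesis by (simp add: algebra_simps)
qed


lemma fg_props:
  assumes "fuchsian_group \<Gamma>"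
  shows "\<And>g. g \<in> \<Gamma> \<Longrightarrow> mat_det g = 1" "mat_id \<in> \<Gamma>"
    "\<And>g h. g \<in> \<Gamma> \<Longrightarrow> h \<in> \<Gamma> \<Longrightarrow> mat_mult g h \<in> \<Gamma>"
    "\<And>g. g \<in> \<Gamma> \<Longrightarrow> mat_inv g \<in> \<Gamma>"
    "\<exists>e>0. \<forall>h\<in>\<Gamma>. dist h mat_id < e \<longrightarrow> h = mat_id"
  using assms unfolding fuchsian_group_def by blast+

lemma kid_lemma:
  assumes det: "a*d - b*c = (1::real)"
  shows "mat_mult (mat_inv (a,b,c,d)) (a',b',c',d') - mat_id = (d*(a'-a) - b*(c'-c), d*(b'-b) - b*(d'-d), a*(c'-c) - c*(a'-a), a*(d'-d) - c*(b'-b))"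
proof -
  have e1: "d*a' - b*c' - 1 = d*(a'-a) - b*(c'-c)" using det by (simp add: algebra_simps)
  have e2: "d*b' - b*d' = d*(b'-b) - b*(d'-d)" by (simp add: algebra_simps)
  have e3: "- c*a' + a*c' = a*(c'-c) - c*(a'-a)" by (simp add: algebra_simps)
  have e4: "- c*b' + a*d' - 1 = a*(d'-d) - c*(b'-b)" using det by (simp add: algebra_simps)
  show ?thesis unfolding mat_mult_def mat_inv_def mat_id_def using e1 e2 e3 e4 by simp
qed

lemma finite_S:
  assumes G: "fuchsian_group \<Gamma>" and p: "Im p > 0" and q: "Im q > 0"
  shows "finite {g\<in>\<Gamma>. hdist p (moeb g q) \<le> hdist p q}"
proof -
  define S where "S = {g\<in>\<Gamma>. hdist p (moeb g q) \<le> hdist p q}"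
  define K where "K = (cmod (p - q))\<^sup>2 / (2 * Im p * Im q)"
  have K: "K \<ge> 0" unfolding K_def using p q by simp
  obtain M0 where M0: "\<And>a b c d. a*d - b*c = 1 \<Longrightarrow>
     (cmod (p - moeb (a,b,c,d) q))\<^sup>2 \<le> 2 * K * Im p * Im (moeb (a,b,c,d) q) \<Longrightarrow>
     \<bar>a\<bar> \<le> M0 \<and> \<bar>b\<bar> \<le> M0 \<and> \<bar>c\<bar> \<le> M0 \<and> \<bar>d\<bar> \<le> M0"
    using entries_bounded[OF p q K] by blast
  define M where "M = \<bar>M0\<bar>"
  have Mnn: "M \<ge> 0" unfolding M_def by simp
  have ent: "\<bar>a\<bar> \<le> M \<and> \<bar>b\<bar> \<le> M \<and> \<bar>c\<bar> \<le> M \<and> \<bar>d\<bar> \<le> M" if "(a,b,c,d) \<in> S" for a b c d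
  proof -
    have gG: "(a,b,c,d) \<in> \<Gamma>" and le: "hdist p (moeb (a,b,c,d) q) \<le> hdist p q" using that S_def by auto
    have det: "a*d - b*c = 1" using fg_props(1)[OF G gG] by (simp add: mat_det_def)
    have wH: "Im (moeb (a,b,c,d) q) > 0" using moeb_in_H[OF q det] .
    have "(cmod (p - moeb (a,b,c,d) q))\<^sup>2 / (2 * Im p * Im (moeb (a,b,c,d) q)) \<le> K"
      using le hdist_le_iff[OF p wH q] unfolding K_def by simp
    then have "(cmod (p - moeb (a,b,c,d) q))\<^sup>2 \<le> K * (2 * Im p * Im (moeb (a,b,c,d) q))"
      using p wH by (simp add: pos_divide_le_eq)
    then have "(cmod (p - moeb (a,b,c,d) q))\<^sup>2 \<le> 2 * K * Im p * Im (moeb (a,b,c,d) q)"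
      by (simp add: algebra_simps)
    then show ?thesis using M0[OF det] unfolding M_def by force
  qed
  have bnd: "bounded S"
  proof -
    have "S \<subseteq> cball 0 (4*M)"
    proof
      fix g assume gS: "g \<in> S"
      obtain a b c d where g: "g = (a,b,c,d)" by (metis prod.exhaust)
      have "norm g \<le> 4*M" using norm4_le[of a b c d] ent[of a b c d] gS g by simp
      then show "g \<in> cball 0 (4*M)" by simp
    qed
    then show ?thesis using bounded_cball bounded_subset by blast
  qed
  obtain e where e: "e > 0" "\<And>h. h \<in> \<Gamma> \<Longrightarrow> dist h mat_id < e \<Longrightarrow> h = mat_id"
    using fg_props(5)[OF G] by blast
  have ud: "uniform_discrete S"
    unfolding uniform_discrete_def
  proof (intro exI[of _ "e / (8*M+1)"] conjI ballI impI)
    show "e / (8*M+1) > 0" using e Mnn by simp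
    fix g h assume gS: "g \<in> S" and hS: "h \<in> S" and dgh: "dist g h < e / (8*M+1)"
    obtain a b c d where g: "g = (a,b,c,d)" by (metis prod.exhaust)
    obtain a' b' c' d' where h: "h = (a',b',c',d')" by (metis prod.exhaust)
    have gG: "g \<in> \<Gamma>" and hG: "h \<in> \<Gamma>" using gS hS S_def by auto
    have det: "a*d - b*c = 1" using fg_props(1)[OF G gG] g by (simp add: mat_det_def)
    define k where "k = mat_mult (mat_inv g) h"
    have kG: "k \<in> \<Gamma>" unfolding k_def using fg_props(3,4)[OF G] gG hG by blast
    define D where "D = dist h g"
    have DD: "dist h g = norm (a'-a, b'-b, c'-c, d'-d)" unfolding g h dist_norm by simp
    have dl1: "\<bar>a'-a\<bar> \<le> D" unfolding D_def DD by (rule norm4_ge(1))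
    have dl2: "\<bar>b'-b\<bar> \<le> D" unfolding D_def DD by (rule norm4_ge(2))
    have dl3: "\<bar>c'-c\<bar> \<le> D" unfolding D_def DD by (rule norm4_ge(3))
    have dl4: "\<bar>d'-d\<bar> \<le> D" unfolding D_def DD by (rule norm4_ge(4))
    note dl = dl1 dl2 dl3 dl4
    have eg: "\<bar>a\<bar> \<le> M" "\<bar>b\<bar> \<le> M" "\<bar>c\<bar> \<le> M" "\<bar>d\<bar> \<le> M" using ent[of a b c d] gS g by auto
    have kid: "k - mat_id = (d*(a'-a) - b*(c'-c), d*(b'-b) - b*(d'-d), a*(c'-c) - c*(a'-a), a*(d'-d) - c*(b'-b))"
      unfolding k_def g h using kid_lemma[OF det] .
    have "dist k mat_id = norm (k - mat_id)" by (simp add: dist_norm)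
    also have "\<dots> \<le> 2*M*D + 2*M*D + 2*M*D + 2*M*D"
      unfolding kid
      apply (rule order_trans[OF norm4_le])
      apply (intro add_mono)
      using aux_bound[OF eg(4) eg(2) dl1 dl3] aux_bound[OF eg(4) eg(2) dl2 dl4]
        aux_bound[OF eg(1) eg(3) dl3 dl1] aux_bound[OF eg(1) eg(3) dl4 dl2]
      by simp_all
    also have "\<dots> = 8*M*D" by simp
    also have "\<dots> \<le> (8*M+1) * D" unfolding D_def by (simp add: algebra_simps)
    also have "\<dots> < e" using dgh Mnn unfolding D_def by (simp add: dist_commute pos_less_divide_eq mult.commute)
    finally have "k = mat_id" using e(2) kG by blast
    then have "h = g" using mat_cancel[of g h] fg_props(1)[OF G gG] mat_mult_id[of g] unfolding k_def by simp
    then show "g = h" by simp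
  qed
  show ?thesis using uniform_discrete_finite_iff ud bnd unfolding S_def[symmetric] by blast
qed


lemma moeb_H_g: "mat_det g = 1 \<Longrightarrow> Im z > 0 \<Longrightarrow> Im (moeb g z) > 0"
  by (cases g) (auto simp: mat_det_def intro: moeb_in_H)

lemma hdist_inv_g: "mat_det g = 1 \<Longrightarrow> Im z > 0 \<Longrightarrow> Im w > 0 \<Longrightarrow> hdist (moeb g z) (moeb g w) = hdist z w"
  by (cases g) (auto simp: mat_det_def intro: hdist_inv)

lemma moeb_comp_g: "mat_det A = 1 \<Longrightarrow> mat_det B = 1 \<Longrightarrow> Im z > 0 \<Longrightarrow>
    moeb (mat_mult A B) z = moeb A (moeb B z)"
  by (cases A; cases B) (auto simp: mat_det_def intro: moeb_comp)

lemma min_attained: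
  assumes G: "fuchsian_group \<Gamma>" and p: "Im p > 0" and q: "Im q > 0"
  shows "\<exists>\<gamma>\<in>\<Gamma>. \<forall>g\<in>\<Gamma>. hdist p (moeb \<gamma> q) \<le> hdist p (moeb g q)"
proof -
  define S where "S = {g\<in>\<Gamma>. hdist p (moeb g q) \<le> hdist p q}"
  define f where "f = (\<lambda>g. hdist p (moeb g q))"
  have fin: "finite S" unfolding S_def using finite_S[OF G p q] .
  have idS: "mat_id \<in> S" unfolding S_def using fg_props(2)[OF G] by (simp add: moeb_id)
  have ne: "f ` S \<noteq> {}" using idS by blast
  have "Min (f ` S) \<in> f ` S" using fin ne by (intro Min_in) auto
  then obtain \<gamma> where \<gamma>S: "\<gamma> \<in> S" and fm: "f \<gamma> = Min (f ` S)" by auto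
  have "\<forall>g\<in>\<Gamma>. f \<gamma> \<le> f g"
  proof
    fix g assume gG: "g \<in> \<Gamma>"
    show "f \<gamma> \<le> f g"
    proof (cases "g \<in> S")
      case True then show ?thesis unfolding fm using fin by (intro Min_le) auto
    next
      case False
      then have "f g > hdist p q" using gG unfolding S_def f_def by auto
      moreover have "f \<gamma> \<le> f mat_id" unfolding fm using fin idS by (intro Min_le) auto
      moreover have "f mat_id = hdist p q" unfolding f_def by (simp add: moeb_id)
      ultimately show ?thesis by linarith
    qed
  qed
  then show ?thesis using \<gamma>S unfolding S_def f_def by auto
qed

theorem proposition2p2:
  fixes \<Gamma> :: "mat2 set" and z0 :: complex
  assumes "fuchsian_group \<Gamma>"
    and "z0 \<in> upper_half_plane"
    and "\<forall>g\<in>\<Gamma>. moeb g z0 = z0 \<longrightarrow> acts_trivially g"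
  shows "geodesic_cover \<Gamma> (U_set \<Gamma> z0) (dirichlet_domain \<Gamma> z0)"
proof -
  note G = assms(1)
  note det = fg_props(1)[OF G]
  define D where "D = dirichlet_domain \<Gamma> z0"
  define U where "U = U_set \<Gamma> z0"
  have z0H: "Im z0 > 0" using assms(2) unfolding upper_half_plane_def by simp
  have DH: "\<And>z. z \<in> D \<Longrightarrow> Im z > 0" unfolding D_def dirichlet_domain_def upper_half_plane_def by auto
  have z0D: "z0 \<in> D" unfolding D_def dirichlet_domain_def upper_half_plane_def
    using z0H by (auto simp: hdist_self intro!: hdist_nonneg moeb_H_g det)
  have DB: "dirichlet_domain \<Gamma> p \<subseteq> B_set \<Gamma> z0" if "p \<in> D" for p
    using that unfolding B_set_def D_def by blast
  have UG: "U \<subseteq> \<Gamma>" unfolding U_def U_set_def by auto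
  have idU: "mat_id \<in> U"
  proof -
    have "z0 \<in> B_set \<Gamma> z0" using DB[OF z0D] z0D unfolding D_def by blast
    then have "moeb mat_id ` D \<inter> B_set \<Gamma> z0 \<noteq> {}" using z0D by (auto simp: moeb_id)
    then show ?thesis unfolding U_def U_set_def D_def using fg_props(2)[OF G] by auto
  qed
  have main: "(\<exists>\<gamma>\<in>\<Gamma>. hdist p (moeb \<gamma> q) = (INF g\<in>\<Gamma>. hdist p (moeb g q))) \<and>
        (\<exists>\<gamma>\<in>U. hdist p (moeb \<gamma> q) = (INF g\<in>U. hdist p (moeb g q))) \<and>
        (INF g\<in>\<Gamma>. hdist p (moeb g q)) = (INF g\<in>U. hdist p (moeb g q))"
    if pD: "p \<in> D" and qD: "q \<in> D" for p q
  proof -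
    have pH: "Im p > 0" and qH: "Im q > 0" using DH pD qD by auto
    obtain \<gamma> where \<gamma>G: "\<gamma> \<in> \<Gamma>" and mn: "\<And>g. g \<in> \<Gamma> \<Longrightarrow> hdist p (moeb \<gamma> q) \<le> hdist p (moeb g q)"
      using min_attained[OF G pH qH] by blast
    have \<gamma>qH: "Im (moeb \<gamma> q) > 0" using moeb_H_g[OF det[OF \<gamma>G] qH] .
    have inDp: "moeb \<gamma> q \<in> dirichlet_domain \<Gamma> p"
      unfolding dirichlet_domain_def upper_half_plane_def
    proof (intro CollectI conjI ballI)
      show "Im (moeb \<gamma> q) > 0" using \<gamma>qH .
      fix \<gamma>' assume \<gamma>'G: "\<gamma>' \<in> \<Gamma>"
      define g where "g = mat_mult (mat_inv \<gamma>') \<gamma>"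
      have gG: "g \<in> \<Gamma>" unfolding g_def using fg_props(3,4)[OF G] \<gamma>G \<gamma>'G by blast
      have "moeb \<gamma> q = moeb (mat_mult \<gamma>' g) q" unfolding g_def using mat_cancel[OF det[OF \<gamma>'G]] by simp
      also have "\<dots> = moeb \<gamma>' (moeb g q)" using moeb_comp_g[OF det[OF \<gamma>'G] det[OF gG] qH] .
      finally have e: "moeb \<gamma> q = moeb \<gamma>' (moeb g q)" .
      have "hdist (moeb \<gamma> q) p = hdist p (moeb \<gamma> q)" by (rule hdist_sym)
      also have "\<dots> \<le> hdist p (moeb g q)" using mn[OF gG] .
      also have "\<dots> = hdist (moeb \<gamma>' p) (moeb \<gamma>' (moeb g q))"
        using hdist_inv_g[OF det[OF \<gamma>'G] pH moeb_H_g[OF det[OF gG] qH]] by simp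
      also have "\<dots> = hdist (moeb \<gamma> q) (moeb \<gamma>' p)" unfolding e[symmetric] by (rule hdist_sym)
      finally show "hdist (moeb \<gamma> q) p \<le> hdist (moeb \<gamma> q) (moeb \<gamma>' p)" .
    qed
    have \<gamma>U: "\<gamma> \<in> U"
    proof -
      have "moeb \<gamma> q \<in> moeb \<gamma> ` D \<inter> B_set \<Gamma> z0" using qD DB[OF pD] inDp by auto
      then show ?thesis unfolding U_def U_set_def D_def using \<gamma>G by auto
    qed
    have i1: "(INF g\<in>\<Gamma>. hdist p (moeb g q)) = hdist p (moeb \<gamma> q)"
      using \<gamma>G mn by (intro cInf_eq_minimum) auto
    have i2: "(INF g\<in>U. hdist p (moeb g q)) = hdist p (moeb \<gamma> q)"
      using \<gamma>U mn UG by (intro cInf_eq_minimum) auto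
    show ?thesis using i1 i2 \<gamma>G \<gamma>U by auto
  qed
  show ?thesis unfolding geodesic_cover_def using UG idU main unfolding U_def D_def by blast
qed

end
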